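(* Assume $\|\mathbf G^{(l)}\|\le A_0B_0^{l-1}$ for all $l\ge1$. For each distinct eigenvalue $\mu_h$ of $\mathbf U$, writing $\hat{\mathbf P}_h(\chi)=\hat{\mathbf P}_h+\sum_{n\ge1}\chi^n\hat{\mathbf P}_h^{(n)}$, there exist constants $A_6,B_6>0$ depending on $N$, $A_0$, $B_0$, the entries of $\mathbf G$ and the isolation distances of $\mathbf T$ such that $\|\hat{\mathbf P}_h^{(n)}\|\le A_6B_6^{n-1}$ for all $n\ge1$ and all $h$.
   Context: $\mathbf G=[g_{ij}]$ is an $N\times N$ Google matrix with all entries positive. Perturbation: $\mathbf G(\chi)=[g_{ij}(\chi)]=\mathbf G+\sum_{l\ge1}\chi^l\mathbf G^{(l)}$, $\chi\in\mathbb C$, convergent near $0$, $\|\cdot\|$ the operator $2$-norm; for real $\chi$ near $0$, $\mathbf G(\chi)$ is row-stochastic with positive entries. $\mathbf T(\chi)=[\sqrt{g_{ij}(\chi)g_{ji}(\chi)}]$, $\mathbf T=\mathbf T(0)$ with distinct eigenvalues $\lambda_1,\dots,\lambda_s$; the isolation distance of $\lambda_h$ is $\min_{k\ne h}|\lambda_k-\lambda_h|$. In $\mathbb C^N\otimes\mathbb C^N$: $|\psi_j(\chi)\rangle=|j\rangle\otimes\sum_k\sqrt{g_{jk}(\chi)}|k\rangle$, $\mathbf B(\chi)=\sum_j|\psi_j(\chi)\rangle\langle\psi_j(\chi)|$ (expanded as a power series in $\chi$), $\mathbf S_w=\sum_{j,k}|k,j\rangle\langle j,k|$, $\mathbf U(\chi)=\mathbf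 S_w(2\mathbf B(\chi)-\mathbf I)$, $\mathbf U=\mathbf U(0)$ (unitary). For a distinct eigenvalue $\mu_h$ of $\mathbf U$, $\hat{\mathbf P}_h(\chi)=-\frac{1}{2\pi\mathrm i}\oint_{\hat\Gamma_h}(\mathbf U(\chi)-\zeta\mathbf I)^{-1}d\zeta$, where $\hat\Gamma_h$ is a circle around $\mu_h$ enclosing no other eigenvalue of $\mathbf U$; $\hat{\mathbf P}_h=\hat{\mathbf P}_h(0)$. *)

theory Defs
  imports "HOL-Complex_Analysis.Complex_Analysis"
begin

definition opnorm :: "complex^'n::finite^'m::finite \<Rightarrow> real" where
  "opnorm A = onorm (\<lambda>x::complex^'n::finite. A *v x)"

definition is_eigenvalue :: "complex^'n::finite^'n \<Rightarrow> complex \<Rightarrow> bool" where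
  "is_eigenvalue A \<mu> \<longleftrightarrow> (\<exists>v. v \<noteq> 0 \<and> A *v v = \<mu> *s v)"

definition pos_row_stochastic :: "real^'n::finite^'n \<Rightarrow> bool" where
  "pos_row_stochastic M \<longleftrightarrow> (\<forall>i j. M $ i $ j > 0) \<and> (\<forall>i. (\<Sum>j\<in>UNIV. M $ i $ j) = 1)"

definition Gpert :: "real^'n::finite^'n \<Rightarrow> (nat \<Rightarrow> complex^'n::finite^'n) \<Rightarrow> complex \<Rightarrow> complex^'n::finite^'n" where
  "Gpert G Gl z = (\<chi> i j. complex_of_real (G $ i $ j) + (\<Sum>l. z ^ Suc l * (Gl (Suc l) $ i $ j)))"

text \<open>B(chi) = sum_j |psi_j(chi)><psi_j(chi)| on C^N (x) C^N, index (j,k) = |j>(x)|k>,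
  with |psi_j(chi)> = |j> (x) sum_k sqrt(g_jk(chi)) |k>; the bra is the analytic
  continuation (no complex conjugation), i.e. B(chi) is expanded as a power series in chi.\<close>
definition psi :: "complex^'n::finite^'n \<Rightarrow> 'n \<Rightarrow> complex^('n \<times> 'n)" where
  "psi M j = (\<chi> p. if fst p = j then csqrt (M $ fst p $ snd p) else 0)"

definition Bop :: "complex^'n::finite^'n \<Rightarrow> complex^('n::finite \<times> 'n)^('n \<times> 'n)" where
  "Bop M = (\<chi> p q. \<Sum>j\<in>UNIV. psi M j $ p * psi M j $ q)"

definition swap_op :: "complex^('n::finite \<times> 'n)^('n \<times> 'n)" where
  "swap_op = (\<chi> p q. if fst p = snd q \<and> snd p = fst q then 1 else 0)"

definition Uop :: "real^'n::finite^'n \<Rightarrow> (nat \<Rightarrow> complex^'n::finite^'n) \<Rightarrow> complex \<Rightarrow> complex^('n::finite \<times> 'n)^('n \<times> 'n)" where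
  "Uop G Gl z = swap_op ** (2 *\<^sub>R Bop (Gpert G Gl z) - mat 1)"

definition Phat :: "real^'n::finite^'n \<Rightarrow> (nat \<Rightarrow> complex^'n::finite^'n) \<Rightarrow> complex \<Rightarrow> real \<Rightarrow> complex
    \<Rightarrow> complex^('n::finite \<times> 'n)^('n \<times> 'n)" where
  "Phat G Gl \<mu> r z = (\<chi> p q. - (1 / (2 * pi * \<i>)) *
      contour_integral (circlepath \<mu> r) (\<lambda>\<zeta>. matrix_inv (Uop G Gl z - mat \<zeta>) $ p $ q))"

definition Phat_coeff :: "real^'n::finite^'n \<Rightarrow> (nat \<Rightarrow> complex^'n::finite^'n) \<Rightarrow> complex \<Rightarrow> real \<Rightarrow> nat
    \<Rightarrow> complex^('n::finite \<times> 'n)^('n \<times> 'n)" where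
  "Phat_coeff G Gl \<mu> r n = (\<chi> p q. (deriv ^^ n) (\<lambda>z. Phat G Gl \<mu> r z $ p $ q) 0 / fact n)"

end

theory Submission
  imports Defs
begin


lemma opnorm_le_sum:
  fixes A :: "complex^'n^'m"
  shows "opnorm A \<le> (\<Sum>i\<in>UNIV. \<Sum>j\<in>UNIV. cmod (A $ i $ j))"
  unfolding opnorm_def
proof (rule onorm_le)
  fix x :: "complex^'n"
  have "norm (A *v x) \<le> (\<Sum>i\<in>UNIV. norm ((A *v x) $ i))"
    by (simp add: norm_vec_def L2_set_le_sum)
  also have "\<dots> \<le> (\<Sum>i\<in>UNIV. \<Sum>j\<in>UNIV. cmod (A $ i $ j) * norm x)"
  proof (rule sum_mono)
    fix i
    have "norm ((A *v x) $ i) = norm (\<Sum>j\<in>UNIV. A $ i $ j * x $ j)"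
      by (simp add: matrix_vector_mult_def)
    also have "\<dots> \<le> (\<Sum>j\<in>UNIV. norm (A $ i $ j * x $ j))"
      by (rule norm_sum)
    also have "\<dots> \<le> (\<Sum>j\<in>UNIV. cmod (A $ i $ j) * norm x)"
      by (rule sum_mono) (simp add: norm_mult mult_left_mono[OF Finite_Cartesian_Product.norm_nth_le norm_ge_zero])
    finally show "norm ((A *v x) $ i) \<le> (\<Sum>j\<in>UNIV. cmod (A $ i $ j) * norm x)" .
  qed
  finally show "norm (A *v x) \<le> (\<Sum>i\<in>UNIV. \<Sum>j\<in>UNIV. cmod (A $ i $ j)) * norm x"
    by (simp add: sum_distrib_right)
qed

lemma entry_le_opnorm:
  fixes A :: "complex^'n^'m"
  shows "cmod (A $ i $ j) \<le> opnorm A"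
proof -
  have "(A *v axis j 1) $ i = A $ i $ j"
    by (simp add: matrix_vector_mult_def axis_def if_distrib cong: if_cong)
  hence "cmod (A $ i $ j) \<le> norm (A *v axis j 1)"
    using Finite_Cartesian_Product.norm_nth_le[where x="A *v axis j 1"] by metis
  also have "\<dots> \<le> opnorm A * norm (axis j (1::complex))"
    unfolding opnorm_def using onorm [OF matrix_vector_mul_bounded_linear, of A "axis j 1"] by auto
  also have "norm (axis j (1::complex)) = 1"
    by (simp add: norm_vec_def L2_set_def axis_def power2_eq_square if_distrib[where f=norm] if_distrib[where f="\<lambda>x. x*x"] cong: if_cong)
  finally show ?thesis by simp
qed

definition crm :: "complex^'m^'m \<Rightarrow> 'm \<Rightarrow> 'm \<Rightarrow> complex^'m^'m" where
  "crm A k q = (\<chi> i j. if j = k then (if i = q then 1 else 0) else A$i$j)"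

lemma cramer_inv:
  fixes A :: "complex^'m^'m"
  assumes "det A \<noteq> 0"
  shows "matrix_inv A $ k $ q = det (crm A k q) / det A"
proof -
  have "invertible A" using assms invertible_det_nz by blast
  then obtain A' where A': "A ** A' = mat 1" "A' ** A = mat 1" unfolding invertible_def by blast
  have "A ** matrix_inv A = mat 1 \<and> matrix_inv A ** A = mat 1"
    unfolding matrix_inv_def by (rule someI[of _ A']) (use A' in auto)
  hence AI: "A ** matrix_inv A = mat 1" by blast
  define x where "x = matrix_inv A *v axis q 1"
  have "A *v x = axis q 1"
    unfolding x_def by (simp add: matrix_vector_mul_assoc AI)
  hence "x = (\<chi> k. det(\<chi> i j. if j=k then (axis q 1::complex^'m)$i else A$i$j) / det A)"
    using cramer[OF assms] by blast
  hence "x $ k = det (crm A k q) / det A"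
    by (simp add: crm_def axis_def cong: if_cong)
  moreover have "x $ k = matrix_inv A $ k $ q"
    by (simp add: x_def matrix_vector_mult_def axis_def if_distrib cong: if_cong)
  ultimately show ?thesis by simp
qed

definition C1 :: "complex set \<Rightarrow> 'b::topological_space set \<Rightarrow> (complex \<Rightarrow> 'b \<Rightarrow> complex) \<Rightarrow> bool" where
  "C1 U T F \<longleftrightarrow> (\<exists>F'. (\<forall>x\<in>U. \<forall>t\<in>T. ((\<lambda>x. F x t) has_field_derivative F' x t) (at x)) \<and>
      continuous_on (U\<times>T) (\<lambda>p. F (fst p) (snd p)) \<and> continuous_on (U\<times>T) (\<lambda>p. F' (fst p) (snd p)))"

lemma C1_const: "continuous_on T g \<Longrightarrow> C1 U T (\<lambda>x t. g t)"
  unfolding C1_def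
  by (rule exI[of _ "\<lambda>x t. 0"])
     (auto intro!: continuous_on_compose2[OF _ continuous_on_snd])

lemma C1_hol:
  assumes "f holomorphic_on U" "open U"
  shows "C1 U T (\<lambda>x t. f x)"
  unfolding C1_def
proof (rule exI[of _ "\<lambda>x t. deriv f x"], intro conjI ballI)
  fix x t assume "x \<in> U"
  then show "((\<lambda>x. f x) has_field_derivative deriv f x) (at x)"
    using assms holomorphic_derivI by blast
next
  have "continuous_on U f" using assms holomorphic_on_imp_continuous_on by blast
  then show "continuous_on (U \<times> T) (\<lambda>p. f (fst p))"
    by (rule continuous_on_compose2[OF _ continuous_on_fst]) auto
next
  have "continuous_on U (deriv f)" using assms holomorphic_deriv holomorphic_on_imp_continuous_on by blast
  then show "continuous_on (U \<times> T) (\<lambda>p. deriv f (fst p))"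
    by (rule continuous_on_compose2[OF _ continuous_on_fst]) auto
qed

lemma C1_add:
  assumes "C1 U T F" "C1 U T G"
  shows "C1 U T (\<lambda>x t. F x t + G x t)"
proof -
  obtain F' where F: "\<forall>x\<in>U. \<forall>t\<in>T. ((\<lambda>x. F x t) has_field_derivative F' x t) (at x)"
    "continuous_on (U\<times>T) (\<lambda>p. F (fst p) (snd p))" "continuous_on (U\<times>T) (\<lambda>p. F' (fst p) (snd p))"
    using assms(1) unfolding C1_def by blast
  obtain G' where G: "\<forall>x\<in>U. \<forall>t\<in>T. ((\<lambda>x. G x t) has_field_derivative G' x t) (at x)"
    "continuous_on (U\<times>T) (\<lambda>p. G (fst p) (snd p))" "continuous_on (U\<times>T) (\<lambda>p. G' (fst p) (snd p))"
    using assms(2) unfolding C1_def by blast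
  show ?thesis unfolding C1_def
    by (rule exI[of _ "\<lambda>x t. F' x t + G' x t"]) (use F G in \<open>auto intro!: derivative_intros continuous_intros\<close>)
qed

lemma C1_mult:
  assumes "C1 U T F" "C1 U T G"
  shows "C1 U T (\<lambda>x t. F x t * G x t)"
proof -
  obtain F' where F: "\<forall>x\<in>U. \<forall>t\<in>T. ((\<lambda>x. F x t) has_field_derivative F' x t) (at x)"
    "continuous_on (U\<times>T) (\<lambda>p. F (fst p) (snd p))" "continuous_on (U\<times>T) (\<lambda>p. F' (fst p) (snd p))"
    using assms(1) unfolding C1_def by blast
  obtain G' where G: "\<forall>x\<in>U. \<forall>t\<in>T. ((\<lambda>x. G x t) has_field_derivative G' x t) (at x)"
    "continuous_on (U\<times>T) (\<lambda>p. G (fst p) (snd p))" "continuous_on (U\<times>T) (\<lambda>p. G' (fst p) (snd p))"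
    using assms(2) unfolding C1_def by blast
  show ?thesis unfolding C1_def
    by (rule exI[of _ "\<lambda>x t. F x t * G' x t + F' x t * G x t"]) (use F G in \<open>auto intro!: derivative_eq_intros continuous_intros\<close>)
qed

lemma C1_inverse:
  assumes "C1 U T F" "\<And>x t. x \<in> U \<Longrightarrow> t \<in> T \<Longrightarrow> F x t \<noteq> 0"
  shows "C1 U T (\<lambda>x t. inverse (F x t))"
proof -
  obtain F' where F: "\<forall>x\<in>U. \<forall>t\<in>T. ((\<lambda>x. F x t) has_field_derivative F' x t) (at x)"
    "continuous_on (U\<times>T) (\<lambda>p. F (fst p) (snd p))" "continuous_on (U\<times>T) (\<lambda>p. F' (fst p) (snd p))"
    using assms(1) unfolding C1_def by blast
  show ?thesis unfolding C1_def
    apply (rule exI[of _ "\<lambda>x t. - (inverse (F x t) * F' x t * inverse (F x t))"])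
    using F assms(2) by (auto intro!: derivative_eq_intros continuous_intros)
qed

lemma C1_neg:
  assumes "C1 U T F"
  shows "C1 U T (\<lambda>x t. - F x t)"
  using C1_mult[OF C1_const[of T "\<lambda>t. -1"] assms] by simp

lemma C1_diff:
  assumes "C1 U T F" "C1 U T G"
  shows "C1 U T (\<lambda>x t. F x t - G x t)"
  using C1_add[OF assms(1) C1_neg[OF assms(2)]] by simp

lemma C1_divide:
  assumes "C1 U T F" "C1 U T G" "\<And>x t. x \<in> U \<Longrightarrow> t \<in> T \<Longrightarrow> G x t \<noteq> 0"
  shows "C1 U T (\<lambda>x t. F x t / G x t)"
  using C1_mult[OF assms(1) C1_inverse[OF assms(2,3)]] by (simp add: field_simps)

lemma C1_sum:
  assumes "finite I" "\<And>i. i \<in> I \<Longrightarrow> C1 U T (F i)"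
  shows "C1 U T (\<lambda>x t. \<Sum>i\<in>I. F i x t)"
  using assms
proof (induction I rule: finite_induct)
  case empty
  then show ?case using C1_const[of T "\<lambda>t. 0"] by simp
next
  case (insert a I)
  then show ?case using C1_add[of U T "F a" "\<lambda>x t. \<Sum>i\<in>I. F i x t"] by simp
qed

lemma C1_prod:
  assumes "finite I" "\<And>i. i \<in> I \<Longrightarrow> C1 U T (F i)"
  shows "C1 U T (\<lambda>x t. \<Prod>i\<in>I. F i x t)"
  using assms
proof (induction I rule: finite_induct)
  case empty
  then show ?case using C1_const[of T "\<lambda>t. 1"] by simp
next
  case (insert a I)
  then show ?case using C1_mult[of U T "F a" "\<lambda>x t. \<Prod>i\<in>I. F i x t"] by simp
qed

lemma C1_det:
  fixes M :: "complex \<Rightarrow> 'b::topological_space \<Rightarrow> complex^'m^'m"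
  assumes "\<And>i j. C1 U T (\<lambda>x t. M x t $ i $ j)"
  shows "C1 U T (\<lambda>x t. det (M x t))"
  unfolding det_def
  by (intro C1_sum C1_mult C1_prod C1_const assms) (auto intro: continuous_intros)

definition Phi :: "complex^'n::finite^'n \<Rightarrow> complex^('n \<times> 'n)^('n \<times> 'n)" where
  "Phi M = swap_op ** (2 *\<^sub>R Bop M - mat 1)"

lemma Uop_Phi: "Uop G Gl z = Phi (Gpert G Gl z)"
  by (simp add: Uop_def Phi_def)

definition Gc :: "real^'n::finite^'n \<Rightarrow> complex^'n^'n" where
  "Gc G = (\<chi> i j. complex_of_real (G $ i $ j))"

lemma Gpert_0: "Gpert G Gl 0 = Gc G"
  by (simp add: Gpert_def Gc_def)

lemma swap_entry: "(swap_op :: complex^('n::finite \<times> 'n)^('n \<times> 'n)) $ p $ k = (if k = (snd p, fst p) then 1 else 0)"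
  by (cases p; cases k) (auto simp: swap_op_def)

lemma if01_mult: "(if P then 1 else 0) * (x::complex) = (if P then x else 0)"
  by simp

lemma swap_mult_entry: "((swap_op :: complex^('n::finite \<times> 'n)^('n \<times> 'n)) ** X) $ p $ q = X $ (snd p, fst p) $ q"
  by (simp add: matrix_matrix_mult_def swap_entry if01_mult)

lemma Bop_entry: "Bop M $ k $ q = (if fst k = fst q then csqrt (M $ fst k $ snd k) * csqrt (M $ fst q $ snd q) else 0)"
proof -
  have "Bop M $ k $ q = (\<Sum>j\<in>UNIV. (if fst k = j then csqrt (M $ j $ snd k) else 0) * (if fst q = j then csqrt (M $ j $ snd q) else 0))"
    unfolding Bop_def psi_def vec_lambda_beta by (intro sum.cong) auto
  also have "\<dots> = (\<Sum>j\<in>UNIV. if j = fst k then (if fst q = j then csqrt (M $ j $ snd k) * csqrt (M $ j $ snd q) else 0) else 0)"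
    by (rule sum.cong) auto
  also have "\<dots> = (if fst k = fst q then csqrt (M $ fst k $ snd k) * csqrt (M $ fst q $ snd q) else 0)"
    by simp
  finally show ?thesis .
qed

lemma Phi_entry: "Phi M $ p $ q = 2 * (if snd p = fst q then csqrt (M $ snd p $ fst p) * csqrt (M $ fst q $ snd q) else 0) - (if (snd p, fst p) = q then 1 else 0)"
  by (simp add: Phi_def swap_mult_entry Bop_entry mat_def scaleR_conv_of_real)

lemma tendsto_if_const:
  "(f \<longlongrightarrow> a) F \<Longrightarrow> (g \<longlongrightarrow> b) F \<Longrightarrow> ((\<lambda>x. if c then f x else g x) \<longlongrightarrow> (if c then a else b)) F"
  by (cases c) auto

lemma Phi_cont:
  fixes G :: "real^'n::finite^'n"
  assumes pos: "\<And>i j. G $ i $ j > 0"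
  shows "isCont Phi (Gc G)"
proof -
  have nn: "Gc G $ a $ b \<notin> \<real>\<^sub>\<le>\<^sub>0" for a b
    using pos[of a b] by (simp add: Gc_def)
  have cs: "((\<lambda>M. csqrt (M $ a $ b)) \<longlongrightarrow> csqrt (Gc G $ a $ b)) (at (Gc G))" for a b
    by (rule isCont_tendsto_compose[OF continuous_at_csqrt[OF nn]])
       (intro tendsto_vec_nth tendsto_ident_at)
  show ?thesis unfolding isCont_def
  proof (intro vec_tendstoI)
    fix p q
    show "((\<lambda>M. Phi M $ p $ q) \<longlongrightarrow> Phi (Gc G) $ p $ q) (at (Gc G))"
      unfolding Phi_entry
      by (intro tendsto_diff tendsto_mult tendsto_const tendsto_if_const cs)
  qed
qed

lemma Phi_cont_eps:
  fixes G :: "real^'n::finite^'n"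
  assumes pos: "\<And>i j. G $ i $ j > 0" and "\<epsilon> > 0"
  shows "\<exists>\<delta>>0. \<forall>M. norm (M - Gc G) < \<delta> \<longrightarrow> norm (Phi M - Phi (Gc G)) < \<epsilon>"
  using Phi_cont[OF pos] assms(2) unfolding continuous_at_eps_delta dist_norm by blast

lemma norm_mat_le_sum:
  fixes M :: "complex^'n::finite^'m::finite"
  shows "norm M \<le> (\<Sum>i\<in>UNIV. \<Sum>j\<in>UNIV. cmod (M $ i $ j))"
proof -
  have "norm M \<le> (\<Sum>i\<in>UNIV. norm (M $ i))"
    by (simp add: norm_vec_def L2_set_le_sum)
  also have "\<dots> \<le> (\<Sum>i\<in>UNIV. \<Sum>j\<in>UNIV. cmod (M $ i $ j))"
    by (intro sum_mono) (simp add: norm_vec_def L2_set_le_sum)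
  finally show ?thesis .
qed

lemma entry_le_norm_mat:
  fixes M :: "complex^'n::finite^'m::finite"
  shows "cmod (M $ i $ j) \<le> norm M"
  by (meson Finite_Cartesian_Product.norm_nth_le order_trans)

definition adm :: "real \<Rightarrow> real \<Rightarrow> (nat \<Rightarrow> complex^'n::finite^'n) \<Rightarrow> bool" where
  "adm A0 B0 Gl \<longleftrightarrow> (\<forall>l\<ge>1. opnorm (Gl l) \<le> A0 * B0 ^ (l - 1))"

lemma Gl_entry_bound: "adm A0 B0 Gl \<Longrightarrow> cmod (Gl (Suc l) $ i $ j) \<le> A0 * B0 ^ l"
  unfolding adm_def using entry_le_opnorm[of "Gl (Suc l)" i j] by (metis diff_Suc_1 le_add1 order_trans plus_1_eq_Suc)

lemma Gpert_series:
  fixes Gl :: "nat \<Rightarrow> complex^'n::finite^'n"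
  assumes "adm A0 B0 Gl" "B0 > 0" "A0 > 0" "cmod z < 1 / B0"
  shows "summable (\<lambda>l. z ^ Suc l * Gl (Suc l) $ i $ j)"
    "cmod (\<Sum>l. z ^ Suc l * Gl (Suc l) $ i $ j) \<le> A0 * cmod z / (1 - B0 * cmod z)"
proof -
  define g where "g l = A0 * cmod z * (B0 * cmod z) ^ l" for l
  have q: "norm (B0 * cmod z) < 1" using assms by (simp add: field_simps)
  have sg: "summable g" unfolding g_def using q by (intro summable_mult summable_geometric)
  have sumg: "suminf g = A0 * cmod z / (1 - B0 * cmod z)"
    unfolding g_def using suminf_mult[OF summable_geometric[OF q], of "A0 * cmod z"] suminf_geometric[OF q]
    by simp
  have b: "norm (z ^ Suc l * Gl (Suc l) $ i $ j) \<le> g l" for l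
  proof -
    have "norm (z ^ Suc l * Gl (Suc l) $ i $ j) = cmod z ^ Suc l * cmod (Gl (Suc l) $ i $ j)"
      by (simp add: norm_mult norm_power)
    also have "\<dots> \<le> cmod z ^ Suc l * (A0 * B0 ^ l)"
      by (intro mult_left_mono Gl_entry_bound assms) auto
    also have "\<dots> = g l" by (simp add: g_def power_mult_distrib)
    finally show ?thesis .
  qed
  show "summable (\<lambda>l. z ^ Suc l * Gl (Suc l) $ i $ j)"
    by (rule summable_comparison_test'[OF sg b])
  show "cmod (\<Sum>l. z ^ Suc l * Gl (Suc l) $ i $ j) \<le> A0 * cmod z / (1 - B0 * cmod z)"
    using norm_suminf_le[OF b sg] sumg by simp
qed

lemma Gpert_entry: "Gpert G Gl z $ i $ j = complex_of_real (G $ i $ j) + (\<Sum>l. z ^ Suc l * Gl (Suc l) $ i $ j)"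
  by (simp add: Gpert_def)

lemma Gpert_near:
  fixes Gl :: "nat \<Rightarrow> complex^'n::finite^'n"
  assumes "adm A0 B0 Gl" "B0 > 0" "A0 > 0" "cmod z \<le> 1 / (2 * B0)"
  shows "norm (Gpert G Gl z - Gc G) \<le> real CARD('n) * real CARD('n) * (2 * A0 * cmod z)"
proof -
  have "1 / (2 * B0) < 1 / B0" using assms(2) by (simp add: field_simps)
  hence z1: "cmod z < 1 / B0" using assms(4) by linarith
  have d: "1/2 \<le> 1 - B0 * cmod z" using assms by (simp add: field_simps)
  have e: "cmod ((Gpert G Gl z - Gc G) $ i $ j) \<le> 2 * A0 * cmod z" for i j
  proof -
    have "cmod ((Gpert G Gl z - Gc G) $ i $ j) = cmod (\<Sum>l. z ^ Suc l * Gl (Suc l) $ i $ j)"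
      by (simp add: Gpert_entry Gc_def)
    also have "\<dots> \<le> A0 * cmod z / (1 - B0 * cmod z)"
      by (rule Gpert_series(2)[OF assms(1-3) z1])
    also have "\<dots> \<le> 2 * A0 * cmod z"
    proof -
      have "A0 * cmod z \<le> (2 * A0 * cmod z) * (1 - B0 * cmod z)"
        using mult_left_mono[OF d, of "2*A0*cmod z"] assms(3) by simp
      moreover have "1 - B0 * cmod z > 0" using d by linarith
      ultimately show ?thesis by (simp add: pos_divide_le_eq)
    qed
    finally show ?thesis .
  qed
  have "norm (Gpert G Gl z - Gc G) \<le> (\<Sum>i\<in>UNIV. \<Sum>j\<in>UNIV. cmod ((Gpert G Gl z - Gc G) $ i $ j))"
    by (rule norm_mat_le_sum)
  also have "\<dots> \<le> (\<Sum>i\<in>(UNIV::'n set). \<Sum>j\<in>(UNIV::'n set). 2 * A0 * cmod z)"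
    by (intro sum_mono e)
  finally show ?thesis by simp
qed

lemma Gpert_hol:
  fixes Gl :: "nat \<Rightarrow> complex^'n::finite^'n"
  assumes "adm A0 B0 Gl" "B0 > 0" "A0 > 0"
  shows "(\<lambda>z. Gpert G Gl z $ i $ j) holomorphic_on ball 0 (1 / B0)"
proof (rule power_series_holomorphic)
  fix w :: complex assume "w \<in> ball 0 (1 / B0)"
  hence w: "cmod w < 1 / B0" by simp
  define f where "f n = (if n = 0 then complex_of_real (G $ i $ j) else Gl n $ i $ j) * w ^ n" for n
  have "(\<lambda>n. f (Suc n)) sums (\<Sum>l. w ^ Suc l * Gl (Suc l) $ i $ j)"
    unfolding f_def using summable_sums[OF Gpert_series(1)[OF assms w, of i j]] by (simp add: mult.commute)
  hence "f sums ((\<Sum>l. w ^ Suc l * Gl (Suc l) $ i $ j) + f 0)"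
    by (simp add: sums_Suc_iff)
  thus "(\<lambda>n. (if n = 0 then complex_of_real (G $ i $ j) else Gl n $ i $ j) * (w - 0) ^ n) sums Gpert G Gl w $ i $ j"
    by (simp add: f_def[abs_def] Gpert_entry add.commute)
qed

lemma mat_mult_vec: "(mat c :: complex^'m^'m) *v v = c *s v"
  by (simp add: vec_eq_iff matrix_vector_mult_def mat_def if_distrib[where f="\<lambda>x. x * _"] cong: if_cong)

lemma eig_det:
  fixes A :: "complex^'m::finite^'m"
  shows "is_eigenvalue A \<mu> \<longleftrightarrow> det (A - mat \<mu>) = 0"
proof -
  have "det (A - mat \<mu>) \<noteq> 0 \<longleftrightarrow> inj ((*v) (A - mat \<mu>))"
    using det_nz_iff_inj_gen[OF matrix_vector_mul_linear_gen, of "A - mat \<mu>"]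
    by (simp add: matrix_of_matrix_vector_mul)
  also have "\<dots> \<longleftrightarrow> (\<forall>x. (A - mat \<mu>) *v x = 0 \<longrightarrow> x = 0)"
    by (rule vec.inj_iff_eq_0)
  also have "\<dots> \<longleftrightarrow> \<not> is_eigenvalue A \<mu>"
    by (auto simp: is_eigenvalue_def matrix_vector_mult_diff_rdistrib mat_mult_vec)
  finally show ?thesis by blast
qed

lemma det_cont:
  fixes M :: "'a::topological_space \<Rightarrow> complex^'m::finite^'m"
  assumes "\<And>i j. continuous_on S (\<lambda>x. M x $ i $ j)"
  shows "continuous_on S (\<lambda>x. det (M x))"
  unfolding det_def by (intro continuous_intros assms)

lemma det_hol:
  fixes M :: "complex \<Rightarrow> complex^'m::finite^'m"
  assumes "\<And>i j. (\<lambda>x. M x $ i $ j) holomorphic_on S"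
  shows "(\<lambda>x. det (M x)) holomorphic_on S"
  unfolding det_def by (intro holomorphic_intros assms)

lemma holomorphic_if_const:
  "f holomorphic_on S \<Longrightarrow> g holomorphic_on S \<Longrightarrow> (\<lambda>x. if c then f x else g x) holomorphic_on S"
  by (cases c) auto

lemma Uop_entry_hol:
  assumes "\<And>i j. (\<lambda>z. Gpert G Gl z $ i $ j) holomorphic_on S"
    and "\<And>z i j. z \<in> S \<Longrightarrow> Gpert G Gl z $ i $ j \<notin> \<real>\<^sub>\<le>\<^sub>0"
  shows "(\<lambda>z. Uop G Gl z $ p $ q) holomorphic_on S"
  unfolding Uop_Phi Phi_entry
  by (intro holomorphic_intros holomorphic_if_const holomorphic_on_csqrt' assms)

lemma Gc_pos_min:
  fixes G :: "real^'n::finite^'n"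
  assumes "\<And>i j. G $ i $ j > 0"
  shows "\<exists>g0>0. \<forall>i j. g0 \<le> G $ i $ j"
proof -
  define g0 where "g0 = Min ((\<lambda>p. G $ fst p $ snd p) ` UNIV)"
  have "g0 \<in> (\<lambda>p. G $ fst p $ snd p) ` UNIV" unfolding g0_def by (intro Min_in) auto
  hence "g0 > 0" using assms by auto
  moreover have "g0 \<le> G $ i $ j" for i j unfolding g0_def
    by (rule Min_le) (auto intro: image_eqI[of _ _ "(i,j)"])
  ultimately show ?thesis by blast
qed

lemma unif:
  fixes G :: "real^'n::finite^'n"
  assumes pos: "\<And>i j. G $ i $ j > 0" and A0: "A0 > 0" and B0: "B0 > 0" and "\<epsilon> > 0"
  shows "\<exists>\<rho>>0. \<rho> \<le> 1 / (2 * B0) \<and> (\<forall>Gl z. adm A0 B0 Gl \<longrightarrow> cmod z < \<rho> \<longrightarrow>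
     norm (Uop G Gl z - Uop G Gl 0) < \<epsilon> \<and> (\<forall>i j. Gpert G Gl z $ i $ j \<notin> \<real>\<^sub>\<le>\<^sub>0))"
proof -
  obtain \<delta> where \<delta>: "\<delta> > 0" "\<And>M. norm (M - Gc G) < \<delta> \<Longrightarrow> norm (Phi M - Phi (Gc G)) < \<epsilon>"
    using Phi_cont_eps[OF pos assms(4)] by blast
  obtain g0 where g0: "g0 > 0" "\<And>i j. g0 \<le> G $ i $ j" using Gc_pos_min[OF pos] by blast
  define \<delta>' where "\<delta>' = min \<delta> g0"
  have \<delta>'0: "\<delta>' > 0" using \<delta> g0 by (simp add: \<delta>'_def)
  define c where "c = real CARD('n) * real CARD('n) * (2 * A0)"
  have c0: "c > 0" using A0 by (simp add: c_def)
  define \<rho> where "\<rho> = min (1 / (2 * B0)) (\<delta>' / (2 * c))"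
  have \<rho>0: "\<rho> > 0" using B0 \<delta>'0 c0 by (simp add: \<rho>_def)
  have main: "norm (Uop G Gl z - Uop G Gl 0) < \<epsilon> \<and> (\<forall>i j. Gpert G Gl z $ i $ j \<notin> \<real>\<^sub>\<le>\<^sub>0)"
    if adm: "adm A0 B0 Gl" and z: "cmod z < \<rho>" for Gl z
  proof -
    have z1: "cmod z \<le> 1 / (2 * B0)" using z by (simp add: \<rho>_def)
    have "norm (Gpert G Gl z - Gc G) \<le> c * cmod z"
      using Gpert_near[OF adm B0 A0 z1, of G] by (simp add: c_def mult.assoc)
    also have "\<dots> < c * (\<delta>' / (2 * c))"
      using z c0 by (intro mult_strict_left_mono) (auto simp: \<rho>_def)
    also have "\<dots> = \<delta>' / 2" using c0 by simp
    finally have nd: "norm (Gpert G Gl z - Gc G) < \<delta>' / 2" .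
    hence "norm (Gpert G Gl z - Gc G) < \<delta>" using \<delta>'0 unfolding \<delta>'_def by linarith
    hence "norm (Phi (Gpert G Gl z) - Phi (Gc G)) < \<epsilon>" by (rule \<delta>(2))
    hence 1: "norm (Uop G Gl z - Uop G Gl 0) < \<epsilon>" by (simp add: Uop_Phi Gpert_0)
    have 2: "Gpert G Gl z $ i $ j \<notin> \<real>\<^sub>\<le>\<^sub>0" for i j
    proof
      assume np: "Gpert G Gl z $ i $ j \<in> \<real>\<^sub>\<le>\<^sub>0"
      have "cmod ((Gpert G Gl z - Gc G) $ i $ j) < g0"
        using le_less_trans[OF entry_le_norm_mat nd, of i j] \<delta>'0 unfolding \<delta>'_def by linarith
      hence "\<bar>Re ((Gpert G Gl z - Gc G) $ i $ j)\<bar> < g0" using abs_Re_le_cmod le_less_trans by blast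
      hence "Re (Gpert G Gl z $ i $ j) > G $ i $ j - g0" by (simp add: Gc_def)
      moreover have "Re (Gpert G Gl z $ i $ j) \<le> 0" using np by (simp add: complex_nonpos_Reals_iff)
      ultimately show False using g0(2)[of i j] by linarith
    qed
    show ?thesis using 1 2 by blast
  qed
  show ?thesis using \<rho>0 main by (intro exI[of _ \<rho>]) (auto simp: \<rho>_def)
qed

lemma continuous_on_if_const:
  "continuous_on S f \<Longrightarrow> continuous_on S g \<Longrightarrow> continuous_on S (\<lambda>x. if c then f x else g x)"
  by (cases c) auto

lemma inv_bound:
  fixes U0 :: "complex^'m::finite^'m"
  assumes K: "compact K" and nz: "\<And>\<zeta>. \<zeta> \<in> K \<Longrightarrow> det (U0 - mat \<zeta>) \<noteq> 0"
  shows "\<exists>\<epsilon>>0. \<exists>C. \<forall>E \<zeta>. norm E \<le> \<epsilon> \<longrightarrow> \<zeta> \<in> K \<longrightarrow>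
           det (U0 + E - mat \<zeta>) \<noteq> 0 \<and> (\<forall>k q. cmod (matrix_inv (U0 + E - mat \<zeta>) $ k $ q) \<le> C)"
proof (cases "K = {}")
  case True then show ?thesis by (intro exI[of _ 1]) auto
next
  case False
  define D where "D x = det (U0 + fst x - mat (snd x))" for x :: "(complex^'m^'m) \<times> complex"
  define Nm where "Nm x = (\<Sum>k\<in>UNIV. \<Sum>q\<in>UNIV. cmod (det (crm (U0 + fst x - mat (snd x)) k q)))"
    for x :: "(complex^'m^'m) \<times> complex"
  define X where "X = cball (0::complex^'m^'m) 1 \<times> K"
  have X: "compact X" unfolding X_def by (intro compact_Times K compact_cball)
  have contD: "continuous_on UNIV D"
    unfolding D_def by (intro det_cont) (auto simp: mat_def intro!: continuous_intros continuous_on_if_const)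
  have contN: "continuous_on UNIV Nm"
    unfolding Nm_def crm_def
    by (intro continuous_intros det_cont) (auto simp: mat_def intro!: continuous_intros continuous_on_if_const)
  have "continuous_on K (\<lambda>\<zeta>. cmod (D (0, \<zeta>)))"
    by (intro continuous_intros continuous_on_compose2[OF contD]) auto
  then obtain \<zeta>0 where \<zeta>0: "\<zeta>0 \<in> K" "\<And>\<zeta>. \<zeta> \<in> K \<Longrightarrow> cmod (D (0, \<zeta>0)) \<le> cmod (D (0, \<zeta>))"
    using continuous_attains_inf[OF K False] by blast
  define m where "m = cmod (D (0, \<zeta>0))"
  have m0: "m > 0" using nz[OF \<zeta>0(1)] by (simp add: m_def D_def)
  have "uniformly_continuous_on X D"
    by (rule compact_uniformly_continuous[OF continuous_on_subset[OF contD] X]) auto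
  then obtain \<eta> where \<eta>: "\<eta> > 0" "\<And>x x'. x \<in> X \<Longrightarrow> x' \<in> X \<Longrightarrow> dist x' x < \<eta> \<Longrightarrow> dist (D x') (D x) < m / 2"
    unfolding uniformly_continuous_on_def using m0 by (metis half_gt_zero)
  have "bounded (Nm ` X)"
    by (intro compact_imp_bounded compact_continuous_image continuous_on_subset[OF contN] X) auto
  then obtain B where B: "\<And>x. x \<in> X \<Longrightarrow> norm (Nm x) \<le> B" unfolding bounded_iff by blast
  define \<epsilon> where "\<epsilon> = min 1 (\<eta> / 2)"
  have \<epsilon>0: "\<epsilon> > 0" using \<eta> by (simp add: \<epsilon>_def)
  have res: "det (U0 + E - mat \<zeta>) \<noteq> 0 \<and> (\<forall>k q. cmod (matrix_inv (U0 + E - mat \<zeta>) $ k $ q) \<le> B / (m / 2))"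
    if E: "norm E \<le> \<epsilon>" and \<zeta>: "\<zeta> \<in> K" for E \<zeta>
  proof -
    have x1: "(E, \<zeta>) \<in> X" "(0, \<zeta>) \<in> X" using E \<zeta> by (auto simp: X_def \<epsilon>_def)
    have "dist (E, \<zeta>) (0, \<zeta>) < \<eta>" using E \<eta> by (simp add: dist_Pair_Pair \<epsilon>_def dist_norm)
    hence "dist (D (E, \<zeta>)) (D (0, \<zeta>)) < m / 2" using \<eta>(2)[OF x1(2) x1(1)] by blast
    moreover have "m \<le> cmod (D (0, \<zeta>))" using \<zeta>0(2)[OF \<zeta>] by (simp add: m_def)
    ultimately have Dlow: "cmod (D (E, \<zeta>)) \<ge> m / 2"
      using norm_triangle_ineq2[of "D (0, \<zeta>)" "D (E, \<zeta>)"] by (simp add: dist_norm norm_minus_commute)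
    hence dnz: "det (U0 + E - mat \<zeta>) \<noteq> 0" using m0 by (auto simp: D_def)
    have "cmod (matrix_inv (U0 + E - mat \<zeta>) $ k $ q) \<le> B / (m / 2)" for k q
    proof -
      have "cmod (det (crm (U0 + E - mat \<zeta>) k q)) \<le> Nm (E, \<zeta>)"
        unfolding Nm_def fst_conv snd_conv
        by (rule order_trans[OF _ member_le_sum[of k]], rule member_le_sum[of q])
           (auto intro!: sum_nonneg)
      also have "\<dots> \<le> B" using B[OF x1(1)] by simp
      finally have nb: "cmod (det (crm (U0 + E - mat \<zeta>) k q)) \<le> B" .
      have "cmod (matrix_inv (U0 + E - mat \<zeta>) $ k $ q) = cmod (det (crm (U0 + E - mat \<zeta>) k q)) / cmod (D (E, \<zeta>))"
        using cramer_inv[OF dnz] by (simp add: D_def norm_divide)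
      also have "\<dots> \<le> B / (m / 2)"
      proof (intro frac_le)
        show "0 \<le> B" using nb by (meson norm_ge_zero order_trans)
      qed (use nb Dlow m0 in auto)
      finally show ?thesis .
    qed
    with dnz show ?thesis by blast
  qed
  show ?thesis using \<epsilon>0 res by blast
qed




lemma norm_smult_vec: "norm (c *s (v::complex^'m::finite)) = cmod c * norm v"
  unfolding norm_vec_def by (simp add: L2_set_right_distrib norm_mult)

lemma eig_bound:
  fixes A :: "complex^'m::finite^'m"
  assumes "is_eigenvalue A \<mu>"
  shows "cmod \<mu> \<le> (\<Sum>i\<in>UNIV. \<Sum>j\<in>UNIV. cmod (A $ i $ j))"
proof -
  obtain v where v: "v \<noteq> 0" "A *v v = \<mu> *s v" using assms unfolding is_eigenvalue_def by blast
  have "cmod \<mu> * norm v = norm (A *v v)" using v by (simp add: norm_smult_vec)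
  also have "\<dots> \<le> opnorm A * norm v"
    unfolding opnorm_def by (rule onorm[OF matrix_vector_mul_bounded_linear])
  also have "\<dots> \<le> (\<Sum>i\<in>UNIV. \<Sum>j\<in>UNIV. cmod (A $ i $ j)) * norm v"
    by (intro mult_right_mono opnorm_le_sum) auto
  finally show ?thesis using v(1) by simp
qed

lemma eig_finite:
  fixes A :: "complex^'m::finite^'m"
  shows "finite {\<mu>. is_eigenvalue A \<mu>}"
proof -
  define S0 where "S0 = (\<Sum>i\<in>UNIV. \<Sum>j\<in>UNIV. cmod (A $ i $ j))"
  define f where "f \<zeta> = det (A - mat \<zeta>)" for \<zeta>
  have hol: "f holomorphic_on UNIV"
    unfolding f_def by (intro det_hol) (auto simp: mat_def intro!: holomorphic_intros holomorphic_if_const)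
  have sub: "{\<mu>. is_eigenvalue A \<mu>} \<subseteq> {z \<in> cball 0 S0. f z = 0}"
    using eig_bound[of A] by (auto simp: f_def eig_det S0_def)
  have nz: "f (of_real (S0 + 1)) \<noteq> 0"
  proof
    assume "f (of_real (S0 + 1)) = 0"
    hence "is_eigenvalue A (of_real (S0 + 1))" by (simp add: f_def eig_det)
    from eig_bound[OF this] have "cmod (complex_of_real (S0 + 1)) \<le> S0" by (simp add: S0_def)
    moreover have "S0 \<ge> 0" unfolding S0_def by (intro sum_nonneg) auto
    ultimately show False by (simp only: norm_of_real)
  qed
  show ?thesis
  proof (cases "f constant_on UNIV")
    case True
    then obtain y where "\<And>x. f x = y" unfolding constant_on_def by blast
    hence "{z \<in> cball 0 S0. f z = 0} = {}" using nz by auto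
    hence "finite {z \<in> cball 0 S0. f z = 0}" by (simp only: finite.emptyI)
    then show ?thesis by (rule finite_subset[OF sub])
  next
    case False
    have "finite {z \<in> cball 0 S0. f z = 0}"
      by (rule holomorphic_compact_finite_zeros[OF hol]) (use False in auto)
    then show ?thesis by (rule finite_subset[OF sub])
  qed
qed


lemma eig_sep:
  fixes A :: "complex^'m::finite^'m"
  shows "\<exists>R>0. R \<le> 1 \<and> (\<forall>\<mu> \<mu>'. is_eigenvalue A \<mu> \<longrightarrow> is_eigenvalue A \<mu>' \<longrightarrow> \<mu> \<noteq> \<mu>' \<longrightarrow> 2 * R < cmod (\<mu>' - \<mu>))"
proof -
  define EV where "EV = {\<mu>. is_eigenvalue A \<mu>}"
  have fin: "finite EV" unfolding EV_def by (rule eig_finite)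
  define Ds where "Ds = insert 1 ((\<lambda>p. cmod (snd p - fst p)) ` {p \<in> EV \<times> EV. fst p \<noteq> snd p})"
  have finD: "finite Ds" unfolding Ds_def using fin by auto
  define d where "d = Min Ds"
  have "d \<in> Ds" unfolding d_def using finD by (intro Min_in) (auto simp: Ds_def)
  hence d0: "d > 0" by (auto simp: Ds_def)
  have dle: "d \<le> cmod (\<mu>' - \<mu>)" if "\<mu> \<in> EV" "\<mu>' \<in> EV" "\<mu> \<noteq> \<mu>'" for \<mu> \<mu>'
    unfolding d_def using finD that by (intro Min_le) (auto simp: Ds_def intro!: image_eqI[of _ _ "(\<mu>, \<mu>')"])
  have d1: "d \<le> 1" unfolding d_def using finD by (intro Min_le) (auto simp: Ds_def)
  show ?thesis
  proof (intro exI[of _ "d / 3"] conjI allI impI)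
    fix \<mu> \<mu>' assume "is_eigenvalue A \<mu>" "is_eigenvalue A \<mu>'" "\<mu> \<noteq> \<mu>'"
    hence "d \<le> cmod (\<mu>' - \<mu>)" using dle by (simp add: EV_def)
    thus "2 * (d / 3) < cmod (\<mu>' - \<mu>)" using d0 by linarith
  qed (use d0 d1 in auto)
qed





lemma C1_if_const: "C1 U T F \<Longrightarrow> C1 U T G \<Longrightarrow> C1 U T (\<lambda>x t. if c then F x t else G x t)"
  by (cases c) auto

lemma param_int_hol:
  assumes "C1 U {0..1} F" "open U" "convex U"
  shows "(\<lambda>x. integral {0..1::real} (F x)) holomorphic_on U"
proof -
  obtain F' where F: "\<forall>x\<in>U. \<forall>t\<in>{0..1}. ((\<lambda>x. F x t) has_field_derivative F' x t) (at x)"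
    "continuous_on (U\<times>{0..1}) (\<lambda>p. F (fst p) (snd p))" "continuous_on (U\<times>{0..1}) (\<lambda>p. F' (fst p) (snd p))"
    using assms(1) unfolding C1_def by blast
  have "(\<lambda>x. integral (cbox 0 1) (F x)) holomorphic_on U"
  proof (rule leibniz_rule_holomorphic[where fx = F'])
    fix x t assume "x \<in> U" "t \<in> cbox (0::real) 1"
    thus "((\<lambda>x. F x t) has_field_derivative F' x t) (at x within U)"
      using F(1) by (auto intro: has_field_derivative_at_within)
  next
    fix x assume x: "x \<in> U"
    have "continuous_on {0..1} (\<lambda>t. F (fst (x, t)) (snd (x, t)))"
      by (rule continuous_on_compose2[OF F(2)]) (use x in \<open>auto intro!: continuous_intros\<close>)
    hence "continuous_on {0..1} (F x)" by simp
    thus "F x integrable_on cbox 0 1" by (simp add: integrable_continuous_interval)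
  next
    show "continuous_on (U \<times> cbox 0 1) (\<lambda>(x, t). F' x t)"
      using F(3) by (simp add: case_prod_beta')
  qed (use assms in auto)
  thus ?thesis by simp
qed

lemma crm_entry: "crm A k q $ i $ j = (if j = k then (if i = q then 1 else 0) else A $ i $ j)"
  by (simp add: crm_def)

lemma resolvent_int_hol:
  fixes Uf :: "complex \<Rightarrow> complex^'m::finite^'m"
  assumes S: "open S" "convex S" and hol: "\<And>i j. (\<lambda>z. Uf z $ i $ j) holomorphic_on S"
    and R: "R > 0" and nz: "\<And>z \<zeta>. z \<in> S \<Longrightarrow> \<zeta> \<in> sphere \<mu> R \<Longrightarrow> det (Uf z - mat \<zeta>) \<noteq> 0"
  shows "(\<lambda>z. contour_integral (circlepath \<mu> R) (\<lambda>\<zeta>. matrix_inv (Uf z - mat \<zeta>) $ k $ q)) holomorphic_on S"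
proof -
  define \<gamma> where "\<gamma> = circlepath \<mu> R"
  define d where "d t = complex_of_real (2 * pi) * \<i> * complex_of_real R * exp (2 * complex_of_real pi * \<i> * complex_of_real t)" for t :: real
  define F where "F z t = det (crm (Uf z - mat (\<gamma> t)) k q) / det (Uf z - mat (\<gamma> t)) * d t" for z t
  have \<gamma>S: "\<gamma> t \<in> sphere \<mu> R" if "t \<in> {0..1}" for t
    using that R path_image_circlepath_nonneg[of R \<mu>] unfolding \<gamma>_def path_image_def by auto
  have cont\<gamma>: "continuous_on {0..1} \<gamma>" unfolding \<gamma>_def circlepath by (intro continuous_intros)
  have contd: "continuous_on {0..1} d" unfolding d_def by (intro continuous_intros)
  have ent: "C1 S {0..1} (\<lambda>z t. (Uf z - mat (\<gamma> t)) $ i $ j)" for i j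
  proof -
    have "C1 S {0..1} (\<lambda>z t. Uf z $ i $ j - (if i = j then \<gamma> t else 0))"
      by (intro C1_diff C1_hol hol S C1_const continuous_on_if_const cont\<gamma> continuous_intros)
    thus ?thesis by (simp add: mat_def)
  qed
  have ent2: "C1 S {0..1} (\<lambda>z t. crm (Uf z - mat (\<gamma> t)) k q $ i $ j)" for i j
    unfolding crm_entry by (intro C1_if_const C1_const continuous_intros ent)
  have C: "C1 S {0..1} F"
    unfolding F_def
    by (intro C1_mult C1_divide C1_det ent ent2 C1_const contd) (use nz \<gamma>S in auto)
  have h: "(\<lambda>z. integral {0..1} (F z)) holomorphic_on S"
    by (rule param_int_hol[OF C S])
  show ?thesis
  proof (rule holomorphic_transform[OF h])
    fix z assume z: "z \<in> S"
    show "integral {0..1} (F z) = contour_integral (circlepath \<mu> R) (\<lambda>\<zeta>. matrix_inv (Uf z - mat \<zeta>) $ k $ q)"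
      unfolding contour_integral_integral \<gamma>_def[symmetric]
    proof (rule integral_cong)
      fix t :: real assume t: "t \<in> {0..1}"
      show "F z t = matrix_inv (Uf z - mat (\<gamma> t)) $ k $ q * vector_derivative \<gamma> (at t)"
        unfolding F_def using cramer_inv[OF nz[OF z \<gamma>S[OF t]]]
        by (simp add: \<gamma>_def vector_derivative_circlepath d_def)
    qed
  qed
qed

lemma resolvent_cont:
  fixes A :: "complex^'m::finite^'m"
  assumes "\<And>\<zeta>. \<zeta> \<in> K \<Longrightarrow> det (A - mat \<zeta>) \<noteq> 0"
  shows "continuous_on K (\<lambda>\<zeta>. matrix_inv (A - mat \<zeta>) $ k $ q)"
proof -
  have "continuous_on K (\<lambda>\<zeta>. det (crm (A - mat \<zeta>) k q) / det (A - mat \<zeta>))"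
    using assms unfolding crm_entry
    by (intro continuous_on_divide det_cont)
       (auto simp: crm_entry mat_def intro!: continuous_intros continuous_on_if_const)
  thus ?thesis
    by (rule continuous_on_cong[THEN iffD1, rotated 2]) (auto simp: cramer_inv assms)
qed

lemma resolvent_hol:
  fixes A :: "complex^'m::finite^'m"
  assumes "\<And>\<zeta>. \<zeta> \<in> K \<Longrightarrow> det (A - mat \<zeta>) \<noteq> 0"
  shows "(\<lambda>\<zeta>. matrix_inv (A - mat \<zeta>) $ k $ q) holomorphic_on K"
proof -
  have "(\<lambda>\<zeta>. det (crm (A - mat \<zeta>) k q) / det (A - mat \<zeta>)) holomorphic_on K"
    using assms
    by (intro holomorphic_on_divide det_hol)
       (auto simp: crm_entry mat_def intro!: holomorphic_intros holomorphic_if_const)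
  thus ?thesis
    by (rule holomorphic_transform) (auto simp: cramer_inv assms)
qed



lemma conv_between:
  fixes u r R :: real
  assumes "0 \<le> u" "u \<le> 1"
  shows "min r R \<le> (1 - u) * r + u * R \<and> (1 - u) * r + u * R \<le> max r R"
proof -
  have e: "(1 - u) * r + u * R = r + u * (R - r)" by (simp add: algebra_simps)
  show ?thesis
  proof (cases "r \<le> R")
    case True
    have "0 \<le> u * (R - r)" "u * (R - r) \<le> R - r"
      using assms True by (auto intro: mult_nonneg_nonneg mult_left_le_one_le)
    then show ?thesis using True e by auto
  next
    case False
    have h1: "u * (R - r) \<le> 0" using assms False by (auto intro: mult_nonneg_nonpos)
    have "(1 - u) * (R - r) \<le> 0" using assms False by (auto intro: mult_nonneg_nonpos)
    moreover have "(1 - u) * (R - r) = (R - r) - u * (R - r)" by (simp add: algebra_simps)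
    ultimately have h2: "R - r \<le> u * (R - r)" by linarith
    have "min r R = R" "max r R = r" using False by auto
    then show ?thesis using e h1 h2 by (simp only:) linarith
  qed
qed

lemma radius_indep:
  fixes A :: "complex^'m::finite^'m"
  assumes "r > 0" "R > 0" "a > 0" "a < min r R" "max r R < b"
    and nz: "\<And>\<zeta>. a \<le> cmod (\<zeta> - \<mu>) \<Longrightarrow> cmod (\<zeta> - \<mu>) \<le> b \<Longrightarrow> det (A - mat \<zeta>) \<noteq> 0"
  shows "contour_integral (circlepath \<mu> r) (\<lambda>\<zeta>. matrix_inv (A - mat \<zeta>) $ k $ q) =
         contour_integral (circlepath \<mu> R) (\<lambda>\<zeta>. matrix_inv (A - mat \<zeta>) $ k $ q)"
proof (rule Cauchy_theorem_homotopic_loops)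
  define Sa where "Sa = ball \<mu> b - cball \<mu> a"
  have inSa: "\<zeta> \<in> Sa \<longleftrightarrow> a < cmod (\<zeta> - \<mu>) \<and> cmod (\<zeta> - \<mu>) < b" for \<zeta>
    by (auto simp: Sa_def dist_norm norm_minus_commute)
  show "open Sa" unfolding Sa_def by auto
  show "(\<lambda>\<zeta>. matrix_inv (A - mat \<zeta>) $ k $ q) holomorphic_on Sa"
    by (rule resolvent_hol) (use nz inSa in auto)
  show "homotopic_loops Sa (circlepath \<mu> r) (circlepath \<mu> R)"
  proof (rule homotopic_loops_linear)
    fix t :: real and x assume t: "t \<in> {0..1}"
    define e where "e = exp (2 * complex_of_real pi * \<i> * complex_of_real t)"
    have ne: "cmod e = 1" unfolding e_def by (simp add: norm_exp_i_times[of "2 * pi * t", simplified] mult.assoc)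
    show "closed_segment (circlepath \<mu> r t) (circlepath \<mu> R t) \<subseteq> Sa"
    proof
      fix w assume "w \<in> closed_segment (circlepath \<mu> r t) (circlepath \<mu> R t)"
      then obtain u where u: "0 \<le> u" "u \<le> 1" "w = (1 - u) *\<^sub>R circlepath \<mu> r t + u *\<^sub>R circlepath \<mu> R t"
        unfolding closed_segment_def by blast
      have "w - \<mu> = complex_of_real ((1 - u) * r + u * R) * e"
        unfolding u(3) circlepath e_def by (simp add: scaleR_conv_of_real algebra_simps)
      hence "cmod (w - \<mu>) = cmod (complex_of_real ((1 - u) * r + u * R)) * cmod e" by (simp only: norm_mult)
      hence "cmod (w - \<mu>) = \<bar>(1 - u) * r + u * R\<bar>" by (simp only: ne norm_of_real mult_1_right)
      moreover have "min r R \<le> (1 - u) * r + u * R \<and> (1 - u) * r + u * R \<le> max r R"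
        by (rule conv_between[OF u(1,2)])
      ultimately show "w \<in> Sa" unfolding inSa using assms by auto
    qed
  qed auto
qed auto



lemma Phat_entry: "Phat G Gl \<mu> r z $ p $ q = - (1 / (2 * pi * \<i>)) *
      contour_integral (circlepath \<mu> r) (\<lambda>\<zeta>. matrix_inv (Uop G Gl z - mat \<zeta>) $ p $ q)"
  by (simp add: Phat_def)

lemma Phat_coeff_entry: "Phat_coeff G Gl \<mu> r n $ p $ q = (deriv ^^ n) (\<lambda>z. Phat G Gl \<mu> r z $ p $ q) 0 / fact n"
  by (simp add: Phat_coeff_def)

lemma norm_Phat_factor: "cmod (- (1 / (complex_of_real (2 * pi) * \<i>)) * w) = cmod w / (2 * pi)"
  by (simp add: norm_mult norm_divide)

theorem lemma5p5:
  fixes G :: "real^'n^'n" and A0 B0 :: real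
  assumes "pos_row_stochastic G" and "A0 > 0" and "B0 > 0"
  shows "\<exists>A6 B6. A6 > 0 \<and> B6 > 0 \<and>
    (\<forall>Gl :: nat \<Rightarrow> complex^'n^'n.
       (\<forall>l\<ge>1. opnorm (Gl l) \<le> A0 * B0 ^ (l - 1)) \<longrightarrow>
       (\<exists>\<delta>>0. \<forall>x::real. \<bar>x\<bar> < \<delta> \<longrightarrow>
          (\<exists>M::real^'n^'n. pos_row_stochastic M \<and>
             Gpert G Gl (complex_of_real x) = (\<chi> i j. complex_of_real (M $ i $ j)))) \<longrightarrow>
       (\<forall>\<mu> r. is_eigenvalue (Uop G Gl 0) \<mu> \<longrightarrow> r > 0 \<longrightarrow>
          (\<forall>\<mu>'. is_eigenvalue (Uop G Gl 0) \<mu>' \<longrightarrow> \<mu>' \<noteq> \<mu> \<longrightarrow> cmod (\<mu>' - \<mu>) > r) \<longrightarrow>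
          (\<forall>n\<ge>1. opnorm (Phat_coeff G Gl \<mu> r n) \<le> A6 * B6 ^ (n - 1))))"
proof -
  have pos: "\<And>i j. G $ i $ j > 0" using assms(1) by (simp add: pos_row_stochastic_def)
  define U0 where "U0 = Phi (Gc G)"
  have U0eq: "\<And>Gl. Uop G Gl 0 = U0" by (simp add: Uop_Phi Gpert_0 U0_def)
  obtain R where R: "R > 0" "R \<le> 1"
    "\<And>\<mu> \<mu>'. is_eigenvalue U0 \<mu> \<Longrightarrow> is_eigenvalue U0 \<mu>' \<Longrightarrow> \<mu> \<noteq> \<mu>' \<Longrightarrow> 2 * R < cmod (\<mu>' - \<mu>)"
    using eig_sep[of U0] by blast
  define EV where "EV = {\<mu>. is_eigenvalue U0 \<mu>}"
  have finEV: "finite EV" unfolding EV_def by (rule eig_finite)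
  define K where "K = (\<Union>\<mu>\<in>EV. sphere \<mu> R)"
  have cK: "compact K" unfolding K_def using finEV by (intro compact_UN) auto
  have Knz: "det (U0 - mat \<zeta>) \<noteq> 0" if "\<zeta> \<in> K" for \<zeta>
  proof
    assume d: "det (U0 - mat \<zeta>) = 0"
    from that obtain \<mu> where \<mu>: "\<mu> \<in> EV" "dist \<mu> \<zeta> = R" unfolding K_def by auto
    have e1: "is_eigenvalue U0 \<zeta>" using d eig_det by blast
    have e2: "is_eigenvalue U0 \<mu>" using \<mu> by (simp add: EV_def)
    have ne: "\<mu> \<noteq> \<zeta>" using \<mu>(2) R(1) by auto
    have "cmod (\<zeta> - \<mu>) = R" using \<mu>(2) by (simp add: dist_norm norm_minus_commute)
    thus False using R(3)[OF e2 e1 ne] R(1) by simp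
  qed
  obtain \<epsilon> C where \<epsilon>: "\<epsilon> > 0"
    and invK: "\<And>E \<zeta>. norm E \<le> \<epsilon> \<Longrightarrow> \<zeta> \<in> K \<Longrightarrow>
           det (U0 + E - mat \<zeta>) \<noteq> 0 \<and> (\<forall>k q. cmod (matrix_inv (U0 + E - mat \<zeta>) $ k $ q) \<le> C)"
    using inv_bound[OF cK Knz] by blast
  obtain \<rho>1 where \<rho>1: "\<rho>1 > 0" "\<rho>1 \<le> 1 / (2 * B0)"
    and un1: "\<And>Gl z. adm A0 B0 Gl \<Longrightarrow> cmod z < \<rho>1 \<Longrightarrow>
       norm (Uop G Gl z - Uop G Gl 0) < \<epsilon> \<and> (\<forall>i j. Gpert G Gl z $ i $ j \<notin> \<real>\<^sub>\<le>\<^sub>0)"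
    using unif[OF pos assms(2,3) \<epsilon>] by blast
  define \<rho> where "\<rho> = \<rho>1 / 2"
  have \<rho>0: "\<rho> > 0" using \<rho>1 by (simp add: \<rho>_def)
  define C' where "C' = max C 0"
  define K0 where "K0 = R * C' + 1"
  have C'0: "C' \<ge> 0" "C \<le> C'" by (auto simp: C'_def)
  have K0: "K0 > 0" "R * C' \<le> K0" using R(1) C'0 by (auto simp: K0_def intro!: add_nonneg_pos)
  define c4 where "c4 = real CARD('n \<times> 'n) * real CARD('n \<times> 'n)"
  have c4: "c4 > 0" by (simp add: c4_def)
  define A6 where "A6 = c4 * K0 / \<rho>"
  define B6 where "B6 = 1 / \<rho>"
  have main: "opnorm (Phat_coeff G Gl \<mu> r n) \<le> A6 * B6 ^ (n - 1)"
    if adm: "adm A0 B0 Gl" and eig\<mu>: "is_eigenvalue (Uop G Gl 0) \<mu>" and r: "r > 0"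
      and iso: "\<forall>\<mu>'. is_eigenvalue (Uop G Gl 0) \<mu>' \<longrightarrow> \<mu>' \<noteq> \<mu> \<longrightarrow> cmod (\<mu>' - \<mu>) > r"
      and n: "n \<ge> 1" for Gl \<mu> r n
  proof -
    define S where "S = ball (0::complex) \<rho>1"
    have S: "open S" "convex S" by (auto simp: S_def)
    have \<mu>EV: "\<mu> \<in> EV" using eig\<mu> by (simp add: EV_def U0eq)
    have sphK: "sphere \<mu> R \<subseteq> K" using \<mu>EV by (auto simp: K_def)
    have "1 / (2 * B0) < 1 / B0" using assms(3) by (simp add: field_simps)
    hence Ssub: "S \<subseteq> ball 0 (1 / B0)" using \<rho>1 by (auto simp: S_def)
    have hol: "(\<lambda>z. Uop G Gl z $ i $ j) holomorphic_on S" for i j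
    proof (rule Uop_entry_hol)
      show "(\<lambda>z. Gpert G Gl z $ i $ j) holomorphic_on S" for i j
        by (rule holomorphic_on_subset[OF Gpert_hol[OF adm assms(3,2)] Ssub])
      show "Gpert G Gl z $ i $ j \<notin> \<real>\<^sub>\<le>\<^sub>0" if "z \<in> S" for z i j
        using un1[OF adm, of z] that by (auto simp: S_def)
    qed
    have onS: "det (Uop G Gl z - mat \<zeta>) \<noteq> 0 \<and> (\<forall>k q. cmod (matrix_inv (Uop G Gl z - mat \<zeta>) $ k $ q) \<le> C)"
      if "z \<in> S" "\<zeta> \<in> sphere \<mu> R" for z \<zeta>
    proof -
      have "norm (Uop G Gl z - U0) \<le> \<epsilon>" using un1[OF adm, of z] that(1) by (auto simp: S_def U0eq)
      from invK[OF this] that(2) sphK show ?thesis by auto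
    qed
    define Q where "Q p q z = Phat G Gl \<mu> R z $ p $ q" for p q z
    have Qhol: "Q p q holomorphic_on S" for p q
    proof -
      have "(\<lambda>z. contour_integral (circlepath \<mu> R) (\<lambda>\<zeta>. matrix_inv (Uop G Gl z - mat \<zeta>) $ p $ q)) holomorphic_on S"
        by (rule resolvent_int_hol[OF S hol R(1)]) (use onS in blast)
      thus ?thesis unfolding Q_def[abs_def] Phat_entry by (intro holomorphic_intros)
    qed
    have Qbound: "cmod (Q p q z) \<le> R * C'" if z: "z \<in> S" for p q z
    proof -
      have cont: "continuous_on (path_image (circlepath \<mu> R)) (\<lambda>\<zeta>. matrix_inv (Uop G Gl z - mat \<zeta>) $ p $ q)"
        unfolding path_image_circlepath_nonneg[OF less_imp_le[OF R(1)]]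
        by (rule resolvent_cont) (use onS z in blast)
      have "cmod (contour_integral (circlepath \<mu> R) (\<lambda>\<zeta>. matrix_inv (Uop G Gl z - mat \<zeta>) $ p $ q)) \<le> C' * (2 * pi * R)"
      proof (rule has_contour_integral_bound_circlepath)
        show "((\<lambda>\<zeta>. matrix_inv (Uop G Gl z - mat \<zeta>) $ p $ q) has_contour_integral
               contour_integral (circlepath \<mu> R) (\<lambda>\<zeta>. matrix_inv (Uop G Gl z - mat \<zeta>) $ p $ q)) (circlepath \<mu> R)"
          by (rule has_contour_integral_integral[OF contour_integrable_continuous_circlepath[OF cont]])
        show "cmod (matrix_inv (Uop G Gl z - mat x) $ p $ q) \<le> C'" if "cmod (x - \<mu>) = R" for x
        proof -
          have xs: "x \<in> sphere \<mu> R" using that by (simp add: dist_norm norm_minus_commute)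
          have "cmod (matrix_inv (Uop G Gl z - mat x) $ p $ q) \<le> C" using onS[OF z xs] by blast
          thus ?thesis using C'0 by linarith
        qed
      qed (use C'0 R in auto)
      moreover have "cmod (Q p q z) = cmod (contour_integral (circlepath \<mu> R) (\<lambda>\<zeta>. matrix_inv (Uop G Gl z - mat \<zeta>) $ p $ q)) / (2 * pi)"
        unfolding Q_def Phat_entry by (rule norm_Phat_factor)
      ultimately have "cmod (Q p q z) \<le> C' * (2 * pi * R) / (2 * pi)"
        by (metis divide_right_mono pi_ge_zero mult_nonneg_nonneg zero_le_numeral)
      thus ?thesis by (simp add: mult.commute)
    qed
    have ev: "\<forall>\<^sub>F z in nhds 0. Phat G Gl \<mu> r z $ p $ q = Q p q z" for p q
    proof -
      define a where "a = min r R / 2"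
      have a: "a > 0" "a < min r R" using r R(1) by (auto simp: a_def)
      define Oth where "Oth = EV - {\<mu>}"
      define d0 where "d0 = Min (insert (max r R + 1) ((\<lambda>\<mu>'. cmod (\<mu>' - \<mu>)) ` Oth))"
      have finO: "finite Oth" using finEV by (simp add: Oth_def)
      have d0in: "d0 \<in> insert (max r R + 1) ((\<lambda>\<mu>'. cmod (\<mu>' - \<mu>)) ` Oth)"
        unfolding d0_def using finO by (intro Min_in) auto
      have gtO: "cmod (\<mu>' - \<mu>) > max r R" if "\<mu>' \<in> Oth" for \<mu>'
      proof -
        have e': "is_eigenvalue U0 \<mu>'" "\<mu>' \<noteq> \<mu>" using that by (auto simp: Oth_def EV_def)
        have "cmod (\<mu>' - \<mu>) > r" using iso e' by (simp add: U0eq)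
        moreover have "2 * R < cmod (\<mu>' - \<mu>)" using R(3)[OF _ e'(1)] e'(2) \<mu>EV by (auto simp: EV_def)
        ultimately show ?thesis using R(1) by auto
      qed
      have d0gt: "d0 > max r R" using d0in gtO by auto
      have d0le: "d0 \<le> cmod (\<mu>' - \<mu>)" if "\<mu>' \<in> Oth" for \<mu>'
        unfolding d0_def using finO that by (intro Min_le) auto
      define b where "b = (max r R + d0) / 2"
      have b: "max r R < b" "b < d0" using d0gt by (auto simp: b_def)
      define K2 where "K2 = cball \<mu> b - ball \<mu> a"
      have cK2: "compact K2" unfolding K2_def by (intro compact_diff) auto
      have inK2: "\<zeta> \<in> K2 \<longleftrightarrow> a \<le> cmod (\<zeta> - \<mu>) \<and> cmod (\<zeta> - \<mu>) \<le> b" for \<zeta>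
        by (auto simp: K2_def dist_norm norm_minus_commute)
      have K2nz: "det (U0 - mat \<zeta>) \<noteq> 0" if "\<zeta> \<in> K2" for \<zeta>
      proof
        assume "det (U0 - mat \<zeta>) = 0"
        hence "is_eigenvalue U0 \<zeta>" using eig_det by blast
        moreover have "\<zeta> \<noteq> \<mu>" using that a inK2 by auto
        ultimately have "\<zeta> \<in> Oth" by (simp add: Oth_def EV_def)
        hence "d0 \<le> cmod (\<zeta> - \<mu>)" by (rule d0le)
        thus False using that b inK2 by auto
      qed
      obtain \<epsilon>2 where \<epsilon>2: "\<epsilon>2 > 0" and inv2: "\<And>E \<zeta>. norm E \<le> \<epsilon>2 \<Longrightarrow> \<zeta> \<in> K2 \<Longrightarrow> det (U0 + E - mat \<zeta>) \<noteq> 0"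
        using inv_bound[OF cK2 K2nz] by blast
      obtain \<rho>2 where \<rho>2: "\<rho>2 > 0"
        and un2: "\<And>Gl z. adm A0 B0 Gl \<Longrightarrow> cmod z < \<rho>2 \<Longrightarrow> norm (Uop G Gl z - Uop G Gl 0) < \<epsilon>2"
        using unif[OF pos assms(2,3) \<epsilon>2] by blast
      have eq: "Phat G Gl \<mu> r z $ p $ q = Q p q z" if z: "z \<in> ball 0 (min \<rho>1 \<rho>2)" for z
      proof -
        have nE: "norm (Uop G Gl z - U0) \<le> \<epsilon>2" using un2[OF adm, of z] z by (auto simp: U0eq)
        have "contour_integral (circlepath \<mu> r) (\<lambda>\<zeta>. matrix_inv (Uop G Gl z - mat \<zeta>) $ p $ q) =
              contour_integral (circlepath \<mu> R) (\<lambda>\<zeta>. matrix_inv (Uop G Gl z - mat \<zeta>) $ p $ q)"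
        proof (rule radius_indep[OF r R(1) a b(1)])
          fix \<zeta> assume "a \<le> cmod (\<zeta> - \<mu>)" "cmod (\<zeta> - \<mu>) \<le> b"
          hence "\<zeta> \<in> K2" by (simp add: inK2)
          from inv2[OF nE this] show "det (Uop G Gl z - mat \<zeta>) \<noteq> 0" by simp
        qed
        thus ?thesis unfolding Q_def Phat_entry by simp
      qed
      show ?thesis unfolding eventually_nhds
        by (rule exI[of _ "ball 0 (min \<rho>1 \<rho>2)"]) (use eq \<rho>1 \<rho>2 in auto)
    qed
    have coef: "cmod (Phat_coeff G Gl \<mu> r n $ p $ q) \<le> K0 / \<rho> ^ n" for p q
    proof -
      have "(deriv ^^ n) (\<lambda>z. Phat G Gl \<mu> r z $ p $ q) 0 = (deriv ^^ n) (Q p q) 0"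
        by (rule higher_deriv_cong_ev[OF ev refl])
      moreover have "cmod ((deriv ^^ n) (Q p q) 0) \<le> fact n * (R * C') / \<rho> ^ n"
      proof (rule Cauchy_inequality)
        have bs: "ball 0 \<rho> \<subseteq> S" "cball 0 \<rho> \<subseteq> S" using \<rho>1 by (auto simp: S_def \<rho>_def)
        show "Q p q holomorphic_on ball 0 \<rho>" by (rule holomorphic_on_subset[OF Qhol bs(1)])
        show "continuous_on (cball 0 \<rho>) (Q p q)"
          by (rule holomorphic_on_imp_continuous_on[OF holomorphic_on_subset[OF Qhol bs(2)]])
        show "cmod (Q p q x) \<le> R * C'" if "cmod (0 - x) = \<rho>" for x
          using Qbound[of x p q] that bs by auto
      qed (use \<rho>0 in auto)
      ultimately have "cmod (Phat_coeff G Gl \<mu> r n $ p $ q) \<le> (R * C') / \<rho> ^ n"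
        unfolding Phat_coeff_entry by (simp add: norm_divide field_simps)
      also have "\<dots> \<le> K0 / \<rho> ^ n" using K0 \<rho>0 by (intro divide_right_mono) auto
      finally show ?thesis .
    qed
    have "opnorm (Phat_coeff G Gl \<mu> r n) \<le> (\<Sum>i\<in>UNIV. \<Sum>j\<in>UNIV. cmod (Phat_coeff G Gl \<mu> r n $ i $ j))"
      by (rule opnorm_le_sum)
    also have "\<dots> \<le> (\<Sum>i\<in>(UNIV::('n\<times>'n) set). \<Sum>j\<in>(UNIV::('n\<times>'n) set). K0 / \<rho> ^ n)"
      by (intro sum_mono coef)
    also have "\<dots> = c4 * (K0 / \<rho> ^ n)" by (simp add: c4_def)
    also have "\<dots> = A6 * B6 ^ (n - 1)"
    proof -
      have "\<rho> ^ n = \<rho> * \<rho> ^ (n - 1)" using n by (metis Suc_diff_le diff_Suc_1 power_Suc)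
      thus ?thesis using \<rho>0 by (simp add: A6_def B6_def power_one_over field_simps)
    qed
    finally show ?thesis .
  qed
  show ?thesis
    apply (rule exI[of _ A6], rule exI[of _ B6])
    using c4 K0 \<rho>0 main by (auto simp: A6_def B6_def adm_def)
qed


end
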